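(* Let $\alpha,\beta\in\mathbb{R}\setminus\mathbb{Q}$, $0<\gamma<1$, $0<\varepsilon<1/2$ and $T>e$, and assume \[ \frac{1}{T^2}m_{\mathbb{R}^2}\left(\left\{(s,t)\in[0,T]^2\ \middle|\ a_{s,t}\tau_{\alpha,\beta}\Gamma\in X_\varepsilon\right\}\right)\geq\gamma, \] where $m_{\mathbb{R}^2}$ is Lebesgue measure on $\mathbb{R}^2$. Then \[ \frac{(\log T)^2}{T^2}\left|\left\{n\in\mathbb{N}\ \middle|\ n<e^{2T},\ n\langle n\alpha\rangle\langle n\beta\rangle\leq\varepsilon^3\right\}\right|\geq\frac{\gamma}{18}. \]
   Context: $\Gamma=\mathrm{SL}(3,\mathbb{Z})$, $X=\mathrm{SL}(3,\mathbb{R})/\Gamma$, where $g\Gamma\in X$ is identified with the unimodular lattice $g\mathbb{Z}^3\subset\mathbb{R}^3$; $\mathrm{SL}(3,\mathbb{R})$ acts on $X$ by left multiplication. For $s,t\in\mathbb{R}$, $a_{s,t}=\mathrm{diag}(e^{-s-t},e^s,e^t)$. $\tau_{\alpha,\beta}$ is the lower triangular unipotent matrix with first column $(1,\alpha,\beta)^t$ and other columns $(0,1,0)^t,(0,0,1)^t$. For $0<\varepsilon<1/2$, $X_\varepsilon=\{x\in X : x\cap \overline{B_\varepsilon}\neq\{0\}\}$, where $B_\varepsilon=\{v\in\mathbb{R}^3: \|v\|_\infty<\varepsilon\}$ and $\|v\|_\infty$ is the maximum of the absolute values of the coordinates. $\langle x\rangle$ denotes the distance from $x\in\mathbb{R}$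 to the nearest integer. *)

theory Defs
  imports "HOL-Analysis.Analysis"
begin

definition dist_int :: "real \<Rightarrow> real" where
  "dist_int x = \<bar>x - of_int (round x)\<bar>"

definition a_mat :: "real \<Rightarrow> real \<Rightarrow> real^3^3" where
  "a_mat s t = (\<chi> i j. if i = j then
      (if i = 1 then exp (- s - t) else if i = 2 then exp s else exp t) else 0)"

definition tau_mat :: "real \<Rightarrow> real \<Rightarrow> real^3^3" where
  "tau_mat \<alpha> \<beta> = (\<chi> i j. if i = j then 1
      else if j = 1 \<and> i = 2 then \<alpha> else if j = 1 \<and> i = 3 then \<beta> else 0)"

text \<open>g \<Gamma> \<in> X_\<epsilon>: the lattice g Z^3 meets the closed sup-norm ball of radius \<epsilon>
  in a nonzero vector.\<close>
definition in_X_eps :: "real \<Rightarrow> real^3^3 \<Rightarrow> bool" where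
  "in_X_eps \<epsilon> g \<longleftrightarrow> (\<exists>v::real^3. (\<forall>i. v $ i \<in> \<int>) \<and> v \<noteq> 0 \<and>
       (\<forall>i. \<bar>(g *v v) $ i\<bar> \<le> \<epsilon>))"

end

theory Submission
  imports Defs
begin

lemma tri_emeasure:
  fixes a b c :: real
  assumes "c \<le> a + b"
  shows "emeasure lborel {p::real\<times>real. fst p \<le> a \<and> snd p \<le> b \<and> c \<le> fst p + snd p}
         = ennreal ((a+b-c)^2/2)"
proof -
  define X where "X = {p::real\<times>real. fst p \<le> a \<and> snd p \<le> b \<and> c \<le> fst p + snd p}"
  have Xm: "X \<in> sets (lborel \<Otimes>\<^sub>M lborel)"
  proof -
    have "closed X" unfolding X_def
      by (intro closed_Collect_conj closed_Collect_le continuous_intros)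
    then show ?thesis unfolding lborel_prod by (simp add: borel_closed)
  qed
  have "emeasure lborel X = emeasure (lborel \<Otimes>\<^sub>M lborel) X" by (simp add: lborel_prod)
  also have "\<dots> = (\<integral>\<^sup>+x. emeasure lborel (Pair x -` X) \<partial>lborel)"
    by (rule lborel.emeasure_pair_measure_alt[OF Xm])
  also have "\<dots> = (\<integral>\<^sup>+x. ennreal (x - (c-b)) * indicator {c-b..a} x \<partial>lborel)"
  proof (rule nn_integral_cong)
    fix x :: real
    have e: "Pair x -` X = (if x \<le> a then {c - x..b} else {})"
      unfolding X_def by auto
    show "emeasure lborel (Pair x -` X) = ennreal (x - (c-b)) * indicator {c-b..a} x"
      unfolding e by (auto simp: indicator_def)
  qed
  also have "\<dots> = ennreal ((\<lambda>x. (x - (c-b))^2/2) a - (\<lambda>x. (x - (c-b))^2/2) (c-b))"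
    by (rule nn_integral_FTC_Icc) (use assms in \<open>auto intro!: derivative_eq_intros\<close>)
  finally show ?thesis unfolding X_def by (simp add: algebra_simps)
qed

lemma tri_fmeas:
  fixes a b c :: real
  shows "{p::real\<times>real. fst p \<le> a \<and> snd p \<le> b \<and> c \<le> fst p + snd p} \<in> fmeasurable lborel"
    and "measure lborel {p::real\<times>real. fst p \<le> a \<and> snd p \<le> b \<and> c \<le> fst p + snd p}
         \<le> (max 0 (a+b-c))^2/2"
proof -
  define X where "X = {p::real\<times>real. fst p \<le> a \<and> snd p \<le> b \<and> c \<le> fst p + snd p}"
  have Xs: "X \<in> sets lborel"
  proof -
    have "closed X" unfolding X_def
      by (intro closed_Collect_conj closed_Collect_le continuous_intros)
    then show ?thesis by (simp add: borel_closed)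
  qed
  have "X \<in> fmeasurable lborel \<and> measure lborel X \<le> (max 0 (a+b-c))^2/2"
  proof (cases "c \<le> a + b")
    case True
    have e: "emeasure lborel X = ennreal ((a+b-c)^2/2)" unfolding X_def by (rule tri_emeasure[OF True])
    then have "X \<in> fmeasurable lborel" using Xs by (simp add: fmeasurable_def)
    moreover have "measure lborel X = (a+b-c)^2/2" using e by (simp add: measure_def)
    ultimately show ?thesis using True by simp
  next
    case False
    then have "X = {}" unfolding X_def by auto
    then show ?thesis by simp
  qed
  then show "X \<in> fmeasurable lborel" "measure lborel X \<le> (max 0 (a+b-c))^2/2" by auto
qed

lemma dist_int_le: "dist_int x \<le> \<bar>x - of_int m\<bar>"
  unfolding dist_int_def by (rule round_diff_minimal)

lemma dist_int_nonneg: "0 \<le> dist_int x"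
  unfolding dist_int_def by simp

lemma dist_int_mult: "dist_int (real k * x) \<le> real k * dist_int x"
proof -
  have "dist_int (real k * x) \<le> \<bar>real k * x - of_int (int k * round x)\<bar>" by (rule dist_int_le)
  also have "\<dots> = \<bar>real k * (x - of_int (round x))\<bar>" by (simp add: algebra_simps)
  also have "\<dots> = real k * dist_int x" unfolding dist_int_def by (simp add: abs_mult)
  finally show ?thesis .
qed

lemma dist_int_pos:
  assumes "\<alpha> \<notin> \<rat>" "1 \<le> n"
  shows "0 < dist_int (real n * \<alpha>)"
proof (rule ccontr)
  assume "\<not> 0 < dist_int (real n * \<alpha>)"
  then have "real n * \<alpha> = of_int (round (real n * \<alpha>))"
    unfolding dist_int_def by simp
  then have "\<alpha> = of_int (round (real n * \<alpha>)) / real n" using assms(2)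
    by (simp add: field_simps)
  then have "\<alpha> \<in> \<rat>" by (metis Rats_divide Rats_of_int Rats_of_nat)
  then show False using assms(1) by simp
qed

lemma tau_v:
  fixes v :: "real^3"
  shows "(tau_mat \<alpha> \<beta> *v v) $ 1 = v$1" "(tau_mat \<alpha> \<beta> *v v) $ 2 = \<alpha> * v$1 + v$2"
    "(tau_mat \<alpha> \<beta> *v v) $ 3 = \<beta> * v$1 + v$3"
  by (simp_all add: matrix_vector_mult_def sum_3 tau_mat_def)
lemma a_v:
  fixes v :: "real^3"
  shows "(a_mat s t *v v) $ 1 = exp (-s-t) * v$1" "(a_mat s t *v v) $ 2 = exp s * v$2"
    "(a_mat s t *v v) $ 3 = exp t * v$3"
  by (simp_all add: matrix_vector_mult_def sum_3 a_mat_def)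
lemma mv:
  fixes v :: "real^3"
  shows "((a_mat s t ** tau_mat \<alpha> \<beta>) *v v) $ 1 = exp (-s-t) * v$1"
    "((a_mat s t ** tau_mat \<alpha> \<beta>) *v v) $ 2 = exp s * (\<alpha> * v$1 + v$2)"
    "((a_mat s t ** tau_mat \<alpha> \<beta>) *v v) $ 3 = exp t * (\<beta> * v$1 + v$3)"
  by (simp_all only: matrix_vector_mul_assoc[symmetric] a_v tau_v)
lemma exp_inv_pair: "exp (-x) * exp x = 1" for x :: real
  by (simp add: exp_minus field_simps)

lemma cover:
  fixes \<alpha> \<beta> \<epsilon> s t T :: real
  assumes "\<alpha> \<notin> \<rat>" "\<beta> \<notin> \<rat>" "0 < \<epsilon>" "\<epsilon> < 1/2" "0 \<le> s" "s \<le> T" "0 \<le> t" "t \<le> T"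
    "in_X_eps \<epsilon> (a_mat s t ** tau_mat \<alpha> \<beta>)"
  shows "\<exists>n::nat. 1 \<le> n \<and> real n < exp (2*T) \<and>
     real n * dist_int (real n * \<alpha>) * dist_int (real n * \<beta>) \<le> \<epsilon>^3 \<and>
     real n \<le> \<epsilon> * exp (s+t) \<and> dist_int (real n * \<alpha>) \<le> \<epsilon> * exp (-s) \<and>
     dist_int (real n * \<beta>) \<le> \<epsilon> * exp (-t)"
proof -
  obtain v :: "real^3" where vi: "\<forall>i. v$i \<in> \<int>" and v0: "v \<noteq> 0"
    and vb: "\<forall>i. \<bar>((a_mat s t ** tau_mat \<alpha> \<beta>) *v v) $ i\<bar> \<le> \<epsilon>"
    using assms(9) unfolding in_X_eps_def by blast
  have b1: "exp (-s-t) * \<bar>v$1\<bar> \<le> \<epsilon>" using vb[rule_format, of 1] by (simp add: mv abs_mult)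
  have b2: "exp s * \<bar>\<alpha> * v$1 + v$2\<bar> \<le> \<epsilon>" using vb[rule_format, of 2] by (simp add: mv abs_mult)
  have b3: "exp t * \<bar>\<beta> * v$1 + v$3\<bar> \<le> \<epsilon>" using vb[rule_format, of 3] by (simp add: mv abs_mult)
  obtain p where p: "v$1 = of_int p" using vi by (meson Ints_cases)
  obtain q where q: "v$2 = of_int q" using vi by (meson Ints_cases)
  obtain r where r: "v$3 = of_int r" using vi by (meson Ints_cases)
  have e1: "1 \<le> exp s" "1 \<le> exp t" using assms by auto
  have p0: "p \<noteq> 0"
  proof
    assume "p = 0"
    then have "exp s * \<bar>of_int q\<bar> \<le> \<epsilon>" "exp t * \<bar>of_int r\<bar> \<le> \<epsilon>" using b2 b3 p q r by simp_all
    moreover have "\<bar>real_of_int q\<bar> \<le> exp s * \<bar>of_int q\<bar>" "\<bar>real_of_int r\<bar> \<le> exp t * \<bar>of_int r\<bar>"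
      using mult_right_mono[OF e1(1), of "\<bar>real_of_int q\<bar>"] mult_right_mono[OF e1(2), of "\<bar>real_of_int r\<bar>"]
      by simp_all
    ultimately have "\<bar>real_of_int q\<bar> < 1" "\<bar>real_of_int r\<bar> < 1" using assms(4) by linarith+
    then have "q = 0" "r = 0" by linarith+
    have "v $ i = 0" for i using exhaust_3[of i] p q r \<open>p = 0\<close> \<open>q = 0\<close> \<open>r = 0\<close> by auto
    then have "v = 0" by (simp add: vec_eq_iff)
    then show False using v0 by simp
  qed
  define n where "n = nat \<bar>p\<bar>"
  have rn: "real n = \<bar>of_int p\<bar>" unfolding n_def by simp
  have n1: "1 \<le> n" using p0 unfolding n_def by simp
  have hn: "real n \<le> \<epsilon> * exp (s+t)"
  proof -
    have "exp (-s-t) * real n \<le> \<epsilon>" using b1 p rn by simp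
    then have "exp (-s-t) * real n * exp (s+t) \<le> \<epsilon> * exp (s+t)" by (simp add: mult_right_mono)
    moreover have "exp (-s-t) * real n * exp (s+t) = real n"
      using exp_inv_pair[of "s+t"] by (simp add: algebra_simps)
    ultimately show ?thesis by simp
  qed
  have hA: "dist_int (real n * \<alpha>) \<le> \<epsilon> * exp (-s)"
  proof -
    have "dist_int (real n * \<alpha>) \<le> \<bar>real n * \<alpha> - of_int (if p > 0 then -q else q)\<bar>" by (rule dist_int_le)
    also have "\<dots> = \<bar>\<alpha> * v$1 + v$2\<bar>"
    proof (cases "p > 0")
      case True then show ?thesis using rn p q by (simp add: algebra_simps)
    next
      case False then have "real n = - of_int p" using rn by simp
      then show ?thesis using False p q by (simp add: algebra_simps abs_minus_commute)
    qed
    also have "\<dots> \<le> \<epsilon> * exp (-s)"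
    proof -
      have "exp s * \<bar>\<alpha> * v$1 + v$2\<bar> * exp (-s) \<le> \<epsilon> * exp (-s)" using b2 by (simp add: mult_right_mono)
      moreover have "exp s * \<bar>\<alpha> * v$1 + v$2\<bar> * exp (-s) = \<bar>\<alpha> * v$1 + v$2\<bar>"
        using exp_inv_pair[of s] by (simp add: algebra_simps)
      ultimately show ?thesis by simp
    qed
    finally show ?thesis .
  qed
  have hB: "dist_int (real n * \<beta>) \<le> \<epsilon> * exp (-t)"
  proof -
    have "dist_int (real n * \<beta>) \<le> \<bar>real n * \<beta> - of_int (if p > 0 then -r else r)\<bar>" by (rule dist_int_le)
    also have "\<dots> = \<bar>\<beta> * v$1 + v$3\<bar>"
    proof (cases "p > 0")
      case True then show ?thesis using rn p r by (simp add: algebra_simps)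
    next
      case False then have "real n = - of_int p" using rn by simp
      then show ?thesis using False p r by (simp add: algebra_simps abs_minus_commute)
    qed
    also have "\<dots> \<le> \<epsilon> * exp (-t)"
    proof -
      have "exp t * \<bar>\<beta> * v$1 + v$3\<bar> * exp (-t) \<le> \<epsilon> * exp (-t)" using b3 by (simp add: mult_right_mono)
      moreover have "exp t * \<bar>\<beta> * v$1 + v$3\<bar> * exp (-t) = \<bar>\<beta> * v$1 + v$3\<bar>"
        using exp_inv_pair[of t] by (simp add: algebra_simps)
      ultimately show ?thesis by simp
    qed
    finally show ?thesis .
  qed
  have prod: "real n * dist_int (real n * \<alpha>) * dist_int (real n * \<beta>) \<le> \<epsilon>^3"
  proof -
    have "real n * dist_int (real n * \<alpha>) * dist_int (real n * \<beta>)
          \<le> (\<epsilon> * exp (s+t)) * (\<epsilon> * exp (-s)) * (\<epsilon> * exp (-t))"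
      by (intro mult_mono hn hA hB mult_nonneg_nonneg dist_int_nonneg) (use assms(3) in auto)
    also have "\<dots> = \<epsilon>^3 * (exp (s+t) * exp (-s) * exp (-t))" by (simp add: algebra_simps power3_eq_cube)
    also have "exp (s+t) * exp (-s) * exp (-t) = 1" by (simp add: exp_add exp_minus field_simps)
    finally show ?thesis by simp
  qed
  have "real n < exp (2*T)"
  proof -
    have "\<epsilon> * exp (s+t) < exp (s+t)" using assms(3,4) by simp
    moreover have "exp (s+t) \<le> exp (2*T)" using assms by simp
    ultimately show ?thesis using hn by linarith
  qed
  then show ?thesis using n1 prod hn hA hB by blast
qed


lemma exp_min: "exp (min a b) = min (exp a) (exp b)" for a b :: real
  by (simp add: min_def)

theorem theorem3p1:
  fixes \<alpha> \<beta> \<gamma> \<epsilon> T :: real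
  assumes "\<alpha> \<notin> \<rat>" and "\<beta> \<notin> \<rat>"
    and "0 < \<gamma>" and "\<gamma> < 1"
    and "0 < \<epsilon>" and "\<epsilon> < 1/2"
    and "T > exp 1"
    and "measure lborel {p :: real \<times> real. case p of (s, t) \<Rightarrow> s \<in> {0..T} \<and> t \<in> {0..T} \<and>
            in_X_eps \<epsilon> (a_mat s t ** tau_mat \<alpha> \<beta>)} / T\<^sup>2 \<ge> \<gamma>"
  shows "(ln T)\<^sup>2 / T\<^sup>2 * real (card {n :: nat. 1 \<le> n \<and> real n < exp (2 * T) \<and>
            real n * dist_int (real n * \<alpha>) * dist_int (real n * \<beta>) \<le> \<epsilon> ^ 3})
         \<ge> \<gamma> / 18"
proof -
  define N where "N = {n :: nat. 1 \<le> n \<and> real n < exp (2 * T) \<and>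
            real n * dist_int (real n * \<alpha>) * dist_int (real n * \<beta>) \<le> \<epsilon> ^ 3}"
  define S where "S = {p :: real \<times> real. case p of (s, t) \<Rightarrow> s \<in> {0..T} \<and> t \<in> {0..T} \<and>
            in_X_eps \<epsilon> (a_mat s t ** tau_mat \<alpha> \<beta>)}"
  define dA where "dA n = dist_int (real n * \<alpha>)" for n :: nat
  define dB where "dB n = dist_int (real n * \<beta>)" for n :: nat
  define A where "A n = ln (\<epsilon> / dA n)" for n :: nat
  define B where "B n = ln (\<epsilon> / dB n)" for n :: nat
  define C where "C n = ln (real n / \<epsilon>)" for n :: nat
  define Tri where "Tri n = {p::real\<times>real. fst p \<le> min (A n) T \<and> snd p \<le> min (B n) T \<and> C n \<le> fst p + snd p}" for n :: nat
  define M where "M n = min (A n) T + min (B n) T - C n" for n :: nat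
  have e2: "2 \<le> exp (1::real)" using exp_ge_add_one_self[of 1] by simp
  have T0: "0 < T" "2 < T" using assms(7) e2 by linarith+
  have lnT: "1 < ln T"
  proof -
    have "ln (exp 1) < ln T" using assms(7) T0 by (subst ln_less_cancel_iff) auto
    then show ?thesis by simp
  qed
  have hS: "\<gamma> * T^2 \<le> measure lborel S"
    using assms(8) T0 unfolding S_def by (simp add: pos_le_divide_eq)
  have finN: "finite N"
  proof (rule finite_subset)
    show "N \<subseteq> {..< nat \<lceil>exp (2*T)\<rceil>}"
    proof
      fix n assume "n \<in> N"
      then have "real n < exp (2*T)" unfolding N_def by simp
      then have "int n < \<lceil>exp (2*T)\<rceil>" by (simp add: less_ceiling_iff)
      then show "n \<in> {..< nat \<lceil>exp (2*T)\<rceil>}" by simp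
    qed
  qed simp
  have dpos: "0 < dA n" "0 < dB n" if "1 \<le> n" for n
    using dist_int_pos[OF assms(1) that] dist_int_pos[OF assms(2) that] unfolding dA_def dB_def by auto
  have cov: "S \<subseteq> (\<Union>n\<in>N. Tri n)"
  proof
    fix x assume "x \<in> S"
    then obtain s t where x: "x = (s,t)" and st: "0 \<le> s" "s \<le> T" "0 \<le> t" "t \<le> T"
      and X: "in_X_eps \<epsilon> (a_mat s t ** tau_mat \<alpha> \<beta>)"
      unfolding S_def by auto
    obtain n where n1: "1 \<le> n" and nlt: "real n < exp (2*T)"
      and np: "real n * dist_int (real n * \<alpha>) * dist_int (real n * \<beta>) \<le> \<epsilon>^3"
      and hn: "real n \<le> \<epsilon> * exp (s+t)" and hA: "dA n \<le> \<epsilon> * exp (-s)" and hB: "dB n \<le> \<epsilon> * exp (-t)"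
      using cover[OF assms(1,2,5,6) st X] unfolding dA_def dB_def by blast
    have nN: "n \<in> N" unfolding N_def using n1 nlt np by simp
    have sA: "s \<le> A n"
    proof -
      have "dA n * exp s \<le> \<epsilon> * exp (-s) * exp s" using hA by (simp add: mult_right_mono)
      also have "\<dots> = \<epsilon>" using exp_inv_pair[of s] by (simp add: algebra_simps)
      finally have "exp s \<le> \<epsilon> / dA n" using dpos[OF n1] by (simp add: pos_le_divide_eq mult.commute)
      then show ?thesis unfolding A_def using dpos[OF n1] assms(5) by (subst ln_ge_iff) auto
    qed
    have tB: "t \<le> B n"
    proof -
      have "dB n * exp t \<le> \<epsilon> * exp (-t) * exp t" using hB by (simp add: mult_right_mono)
      also have "\<dots> = \<epsilon>" using exp_inv_pair[of t] by (simp add: algebra_simps)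
      finally have "exp t \<le> \<epsilon> / dB n" using dpos[OF n1] by (simp add: pos_le_divide_eq mult.commute)
      then show ?thesis unfolding B_def using dpos[OF n1] assms(5) by (subst ln_ge_iff) auto
    qed
    have Cst: "C n \<le> s + t"
    proof -
      have "real n / \<epsilon> \<le> exp (s+t)" using hn assms(5) by (simp add: pos_divide_le_eq mult.commute)
      then have "ln (real n / \<epsilon>) \<le> ln (exp (s+t))" using n1 assms(5) by (subst ln_le_cancel_iff) auto
      then show ?thesis unfolding C_def by simp
    qed
    have "(s,t) \<in> Tri n" unfolding Tri_def using sA tB Cst st by simp
    then show "x \<in> (\<Union>n\<in>N. Tri n)" using nN x by blast
  qed
  show ?thesis
  proof (cases "\<exists>n\<in>N. M n > 6 * ln T")
    case True
    then obtain n where nN: "n \<in> N" and Mn: "M n > 6 * ln T" by blast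
    have n1: "1 \<le> n" using nN unfolding N_def by simp
    have dApos: "0 < dA n" and dBpos: "0 < dB n" using dpos[OF n1] by auto
    have T6: "exp (6 * ln T) = T^6"
    proof -
      have "exp (6 * ln T) = T powr (real 6)" using T0 by (simp add: powr_def)
      also have "\<dots> = T^6" using T0 by (subst powr_realpow) auto
      finally show ?thesis .
    qed
    define P where "P = min (\<epsilon> / dA n) (exp T)"
    define Q where "Q = min (\<epsilon> / dB n) (exp T)"
    have Ppos: "0 < P" and Qpos: "0 < Q" unfolding P_def Q_def using dApos dBpos assms(5) by auto
    have eM: "exp (M n) = P * Q * \<epsilon> / real n"
    proof -
      have "exp (M n) = exp (min (A n) T) * exp (min (B n) T) / exp (C n)"
        unfolding M_def by (simp add: exp_diff exp_add)
      also have "exp (min (A n) T) = P" unfolding P_def exp_min A_def using dApos assms(5) by simp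
      also have "exp (min (B n) T) = Q" unfolding Q_def exp_min B_def using dBpos assms(5) by simp
      also have "exp (C n) = real n / \<epsilon>" unfolding C_def using n1 assms(5) by simp
      finally show ?thesis by simp
    qed
    have big: "T^6 < P * Q * \<epsilon> / real n"
    proof -
      have "exp (6 * ln T) < exp (M n)" using Mn by simp
      then show ?thesis using T6 eM by simp
    qed
    then have big': "T^6 * real n < P * Q * \<epsilon>" using n1 by (simp add: pos_less_divide_eq)
    have i1: "T^6 * real n < exp T * exp T * \<epsilon>"
    proof -
      have "P * Q \<le> exp T * exp T" unfolding P_def Q_def
        by (intro mult_mono) (use dApos dBpos assms(5) in auto)
      then have "P * Q * \<epsilon> \<le> exp T * exp T * \<epsilon>" by (rule mult_right_mono) (use assms(5) in simp)
      then show ?thesis using big' by linarith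
    qed
    have i2: "T^6 * (real n * dA n * dB n) < \<epsilon>^3"
    proof -
      have "P * Q \<le> (\<epsilon> / dA n) * (\<epsilon> / dB n)" unfolding P_def Q_def
        by (intro mult_mono) (use dApos dBpos assms(5) in auto)
      then have "P * Q * \<epsilon> \<le> (\<epsilon> / dA n) * (\<epsilon> / dB n) * \<epsilon>" by (rule mult_right_mono) (use assms(5) in simp)
      then have "T^6 * real n < (\<epsilon> / dA n) * (\<epsilon> / dB n) * \<epsilon>" using big' by linarith
      then have "T^6 * real n * (dA n * dB n) < (\<epsilon> / dA n) * (\<epsilon> / dB n) * \<epsilon> * (dA n * dB n)"
        by (rule mult_strict_right_mono) (use dApos dBpos in simp)
      also have "\<dots> = \<epsilon>^3" using dApos dBpos by (simp add: field_simps power3_eq_cube)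
      finally show ?thesis by (simp add: algebra_simps)
    qed
    define K where "K = nat \<lfloor>T^2\<rfloor>"
    have sub: "(\<lambda>k. k * n) ` {1..K} \<subseteq> N"
    proof
      fix m assume "m \<in> (\<lambda>k. k * n) ` {1..K}"
      then obtain k where k: "1 \<le> k" "k \<le> K" and m: "m = k * n" by auto
      have kT: "real k \<le> T^2"
      proof -
        have "int k \<le> \<lfloor>T^2\<rfloor>" using k unfolding K_def by linarith
        then show ?thesis by (simp add: le_floor_iff)
      qed
      have T26: "T^2 \<le> T^6" using T0 by (intro power_increasing) auto
      have m1: "1 \<le> m" using k n1 m by simp
      have mlt: "real m < exp (2*T)"
      proof -
        have "real m = real k * real n" using m by simp
        also have "\<dots> \<le> T^6 * real n" using kT T26 by (intro mult_right_mono) auto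
        also have "\<dots> < exp T * exp T * \<epsilon>" by (rule i1)
        also have "\<dots> < exp T * exp T" using assms(6) by simp
        also have "\<dots> = exp (2*T)" by (simp add: exp_add[symmetric])
        finally show ?thesis .
      qed
      have mp: "real m * dist_int (real m * \<alpha>) * dist_int (real m * \<beta>) \<le> \<epsilon>^3"
      proof -
        have eqa: "real m * \<alpha> = real k * (real n * \<alpha>)" "real m * \<beta> = real k * (real n * \<beta>)"
          using m by simp_all
        have da: "dist_int (real m * \<alpha>) \<le> real k * dA n" unfolding eqa dA_def by (rule dist_int_mult)
        have db: "dist_int (real m * \<beta>) \<le> real k * dB n" unfolding eqa dB_def by (rule dist_int_mult)
        have "real m * dist_int (real m * \<alpha>) * dist_int (real m * \<beta>) \<le> real m * (real k * dA n) * (real k * dB n)"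
          by (intro mult_mono da db mult_nonneg_nonneg dist_int_nonneg) (use dApos in auto)
        also have "\<dots> = real k ^ 3 * (real n * dA n * dB n)" using m by (simp add: power3_eq_cube)
        also have "\<dots> \<le> T^6 * (real n * dA n * dB n)"
        proof (rule mult_right_mono)
          have "real k ^ 3 \<le> (T^2)^3" using kT by (intro power_mono) auto
          then show "real k ^ 3 \<le> T^6" by (simp flip: power_mult)
        qed (use dApos dBpos in auto)
        also have "\<dots> < \<epsilon>^3" by (rule i2)
        finally show ?thesis by simp
      qed
      show "m \<in> N" unfolding N_def using m1 mlt mp by simp
    qed
    have cK: "card ((\<lambda>k. k * n) ` {1..K}) = K"
    proof -
      have "inj_on (\<lambda>k. k * n) {1..K}" using n1 by (auto simp: inj_on_def)
      then show ?thesis by (simp add: card_image)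
    qed
    have KN: "K \<le> card N" using card_mono[OF finN sub] cK by simp
    have Kge: "T^2 - 1 \<le> real K"
    proof -
      have "0 \<le> \<lfloor>T^2\<rfloor>" by simp
      then have "real K = real_of_int \<lfloor>T^2\<rfloor>" unfolding K_def by simp
      then show ?thesis by linarith
    qed
    have c1: "T^2 - 1 \<le> real (card N)" using KN Kge by linarith
    have l1: "1 \<le> (ln T)^2" using lnT by (simp add: one_le_power)
    have "T^2 - 1 \<le> (ln T)^2 * real (card N)"
    proof -
      have "T^2 - 1 \<le> 1 * real (card N)" using c1 by simp
      also have "\<dots> \<le> (ln T)^2 * real (card N)" using l1 by (intro mult_right_mono) auto
      finally show ?thesis .
    qed
    moreover have "\<gamma> / 18 * T^2 \<le> T^2 - 1"
    proof -
      have "2 * 2 \<le> T * T" using T0 by (intro mult_mono) auto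
      then have "4 \<le> T^2" by (simp add: power2_eq_square)
      moreover have "\<gamma> / 18 * T^2 \<le> 1 / 18 * T^2" using assms(4) by (intro mult_right_mono) auto
      ultimately show ?thesis by linarith
    qed
    ultimately have "\<gamma> / 18 * T^2 \<le> (ln T)^2 * real (card N)" by linarith
    then show ?thesis unfolding N_def[symmetric] using T0 by (simp add: field_simps)
  next
    case False
    then have Msmall: "M n \<le> 6 * ln T" if "n \<in> N" for n using that by auto
    have fm: "Tri n \<in> fmeasurable lborel" for n unfolding Tri_def by (rule tri_fmeas(1))
    have mT: "measure lborel (Tri n) \<le> 18 * (ln T)^2" if "n \<in> N" for n
    proof -
      have "measure lborel (Tri n) \<le> (max 0 (M n))^2/2" unfolding Tri_def M_def by (rule tri_fmeas(2))
      also have "\<dots> \<le> (6 * ln T)^2/2"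
      proof -
        have "(max 0 (M n))^2 \<le> (6 * ln T)^2" using Msmall[OF that] lnT by (intro power_mono) auto
        then show ?thesis by simp
      qed
      also have "\<dots> = 18 * (ln T)^2" by (simp add: power_mult_distrib)
      finally show ?thesis .
    qed
    have Ss: "S \<in> sets lborel"
    proof (rule ccontr)
      assume "S \<notin> sets lborel"
      then have "measure lborel S = 0" by (rule measure_notin_sets)
      moreover have "0 < \<gamma> * T^2" using assms(3) T0 by simp
      ultimately show False using hS by linarith
    qed
    have "measure lborel S \<le> measure lborel (\<Union>n\<in>N. Tri n)"
      by (rule measure_mono_fmeasurable[OF cov Ss]) (use finN fm in \<open>auto intro: fmeasurable.finite_UN\<close>)
    also have "\<dots> \<le> (\<Sum>n\<in>N. measure lborel (Tri n))"
      by (rule measure_UNION_le[OF finN]) (rule fmeasurableD[OF fm])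
    also have "\<dots> \<le> (\<Sum>n\<in>N. 18 * (ln T)^2)" by (rule sum_mono) (rule mT)
    also have "\<dots> = real (card N) * (18 * (ln T)^2)" by simp
    finally have "\<gamma> * T^2 \<le> real (card N) * (18 * (ln T)^2)" using hS by linarith
    then show ?thesis unfolding N_def[symmetric] using T0 by (simp add: field_simps)
  qed
qed

end
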